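(* Let $\{a_n\}_{n=1}^\infty\subset(0,1]$ and define $P_n,Q_n:\{-1,1\}^n\to\mathbb{R}$ by $P_0\equiv Q_0\equiv 1$ and \[ P_{n+1}=P_n+\varepsilon_{n+1}a_{n+1}Q_n,\qquad Q_{n+1}=\varepsilon_{n+1}a_{n+1}P_n-Q_n,\qquad n=0,1,\dots \] Then for all $n=1,2,\dots$, the function $|P_n|^2+|Q_n|^2$ is constant, with \[ |P_n|^2+|Q_n|^2\equiv 2\prod_{i=1}^n(1+a_i^2), \] \[ \|P_n\|_2=\|Q_n\|_2=\prod_{i=1}^n(1+a_i^2)^{1/2}, \] \[ \prod_{i=1}^n(1+a_i^2)^{1/2}\le\|P_n\|_\infty,\ \|Q_n\|_\infty\le\sqrt{2}\prod_{i=1}^n(1+a_i^2)^{1/2}, \] and for each $A\subseteq[n]$, \[ \hat P_n(A)^2=\hat Q_n(A)^2=\prod_{i\in A}a_i^2. \]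
   Context: Equip $\{-1,1\}^n$ with the uniform probability measure; $\|g\|_2^2=2^{-n}\sum_{\delta}|g(\delta)|^2$ and $\|g\|_\infty=\max_\delta|g(\delta)|$. Here $\varepsilon_i$ denotes the $i$-th coordinate function $\varepsilon_i(\delta_1,\dots,\delta_m)=\delta_i$ (a function on $\{-1,1\}^m$ for any $m\ge i$; functions on $\{-1,1\}^n$ are regarded as functions on $\{-1,1\}^{n+1}$ not depending on the last coordinate). For $A\subseteq[n]=\{1,\dots,n\}$, $W_A=\prod_{i\in A}\varepsilon_i$ and $\hat g(A)=2^{-n}\sum_{\delta\in\{-1,1\}^n}g(\delta)W_A(\delta)$. *)

theory Defs
  imports "HOL-Library.FuncSet" Complex_Main
begin

definition cube :: "nat \<Rightarrow> (nat \<Rightarrow> real) set" where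
  "cube n = PiE {1..n} (\<lambda>_. {-1, 1})"

fun Pf :: "(nat \<Rightarrow> real) \<Rightarrow> nat \<Rightarrow> (nat \<Rightarrow> real) \<Rightarrow> real"
and Qf :: "(nat \<Rightarrow> real) \<Rightarrow> nat \<Rightarrow> (nat \<Rightarrow> real) \<Rightarrow> real" where
  "Pf a 0 \<delta> = 1"
| "Qf a 0 \<delta> = 1"
| "Pf a (Suc n) \<delta> = Pf a n \<delta> + \<delta> (Suc n) * a (Suc n) * Qf a n \<delta>"
| "Qf a (Suc n) \<delta> = \<delta> (Suc n) * a (Suc n) * Pf a n \<delta> - Qf a n \<delta>"

definition norm2 :: "nat \<Rightarrow> ((nat \<Rightarrow> real) \<Rightarrow> real) \<Rightarrow> real" where
  "norm2 n g = sqrt ((\<Sum>\<delta>\<in>cube n. (g \<delta>)\<^sup>2) / 2 ^ n)"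

definition normInf :: "nat \<Rightarrow> ((nat \<Rightarrow> real) \<Rightarrow> real) \<Rightarrow> real" where
  "normInf n g = Max ((\<lambda>\<delta>. \<bar>g \<delta>\<bar>) ` cube n)"

definition walsh :: "nat set \<Rightarrow> (nat \<Rightarrow> real) \<Rightarrow> real" where
  "walsh A \<delta> = (\<Prod>i\<in>A. \<delta> i)"

definition fourier :: "nat \<Rightarrow> ((nat \<Rightarrow> real) \<Rightarrow> real) \<Rightarrow> nat set \<Rightarrow> real" where
  "fourier n g A = (\<Sum>\<delta>\<in>cube n. g \<delta> * walsh A \<delta>) / 2 ^ n"

end

theory Submission
  imports Defs
begin

lemma sqrt_prod_gen: "finite S \<Longrightarrow> sqrt (\<Prod>i\<in>S. f i) = (\<Prod>i\<in>S. sqrt (f i))"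
  by (induct S rule: finite_induct) (simp_all add: real_sqrt_mult)

lemma finite_cube: "finite (cube n)"
  unfolding cube_def by (rule finite_PiE) auto

lemma card_cube: "card (cube n) = 2 ^ n"
  unfolding cube_def by (simp add: card_PiE numeral_2_eq_2)

lemma cube_nonempty: "cube n \<noteq> {}"
  unfolding cube_def by (simp add: PiE_eq_empty_iff)

lemma cube_sum:
  "(\<Sum>d\<in>cube (Suc n). g d) = (\<Sum>d\<in>cube n. g (d(Suc n := 1)) + g (d(Suc n := -1)))"
proof -
  have eq: "cube (Suc n) = (\<lambda>(y,h). h(Suc n := y)) ` ({-1,1} \<times> cube n)"
    unfolding cube_def by (simp add: atLeastAtMostSuc_conv PiE_insert_eq)
  have inj: "inj_on (\<lambda>(y,h). h(Suc n := y)) ({-1,1} \<times> cube n)"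
    unfolding cube_def using inj_combinator[of "Suc n" "{1..n}" "\<lambda>_. {-1,1::real}"] by simp
  have "(\<Sum>d\<in>cube (Suc n). g d) = (\<Sum>p\<in>{-1,1} \<times> cube n. g ((\<lambda>(y,h). h(Suc n := y)) p))"
    unfolding eq by (rule sum.reindex[OF inj, unfolded comp_def])
  also have "\<dots> = (\<Sum>y\<in>{-1,1}. \<Sum>h\<in>cube n. g (h(Suc n := y)))"
    by (simp add: sum.cartesian_product split_def)
  also have "\<dots> = (\<Sum>d\<in>cube n. g (d(Suc n := 1)) + g (d(Suc n := -1)))"
    by (simp add: sum.distrib add.commute)
  finally show ?thesis .
qed

lemma PQ_indep: "n < k \<Longrightarrow> Pf a n (d(k := e)) = Pf a n d \<and> Qf a n (d(k := e)) = Qf a n d"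
  by (induct n) auto

lemma P_upd[simp]: "Pf a n (d(Suc n := e)) = Pf a n d"
  using PQ_indep by auto
lemma Q_upd[simp]: "Qf a n (d(Suc n := e)) = Qf a n d"
  using PQ_indep by auto

lemma walsh_notin: "Suc n \<notin> A \<Longrightarrow> walsh A (d(Suc n := e)) = walsh A d"
  unfolding walsh_def by (rule prod.cong) auto

lemma walsh_in: "Suc n \<in> A \<Longrightarrow> finite A \<Longrightarrow> walsh A (d(Suc n := e)) = e * walsh (A - {Suc n}) d"
proof -
  assume h: "Suc n \<in> A" "finite A"
  have "walsh A (d(Suc n := e)) = (d(Suc n := e)) (Suc n) * (\<Prod>i\<in>A - {Suc n}. (d(Suc n := e)) i)"
    unfolding walsh_def using h by (simp add: prod.remove)
  also have "(\<Prod>i\<in>A - {Suc n}. (d(Suc n := e)) i) = walsh (A - {Suc n}) d"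
    unfolding walsh_def by (rule prod.cong) auto
  finally show ?thesis by (simp only: fun_upd_same)
qed

lemma pointwise:
  "(\<forall>i. 1 \<le> i \<and> i \<le> n \<longrightarrow> d i \<in> {-1,1}) \<Longrightarrow>
   (Pf a n d)\<^sup>2 + (Qf a n d)\<^sup>2 = 2 * (\<Prod>i=1..n. 1 + (a i)\<^sup>2)"
proof (induct n)
  case 0 then show ?case by simp
next
  case (Suc n)
  have IH: "(Pf a n d)\<^sup>2 + (Qf a n d)\<^sup>2 = 2 * (\<Prod>i=1..n. 1 + (a i)\<^sup>2)"
    using Suc by auto
  have e: "(d (Suc n))\<^sup>2 = 1" using Suc.prems by auto
  have "(Pf a (Suc n) d)\<^sup>2 + (Qf a (Suc n) d)\<^sup>2
     = ((Pf a n d)\<^sup>2 + (Qf a n d)\<^sup>2) + (d (Suc n))\<^sup>2 * (a (Suc n))\<^sup>2 * ((Pf a n d)\<^sup>2 + (Qf a n d)\<^sup>2)"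
    by (simp add: power2_eq_square algebra_simps)
  also have "\<dots> = (1 + (a (Suc n))\<^sup>2) * ((Pf a n d)\<^sup>2 + (Qf a n d)\<^sup>2)"
    using e by (simp add: algebra_simps)
  finally show ?case using IH by (simp add: prod.nat_ivl_Suc' mult_ac)
qed

lemma sums_sq:
  "(\<Sum>d\<in>cube n. (Pf a n d)\<^sup>2) = 2 ^ n * (\<Prod>i=1..n. 1 + (a i)\<^sup>2) \<and>
   (\<Sum>d\<in>cube n. (Qf a n d)\<^sup>2) = 2 ^ n * (\<Prod>i=1..n. 1 + (a i)\<^sup>2)"
proof (induct n)
  case 0 then show ?case by (simp add: cube_def)
next
  case (Suc n)
  let ?c = "a (Suc n)"
  have "(\<Sum>d\<in>cube (Suc n). (Pf a (Suc n) d)\<^sup>2)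
     = (\<Sum>d\<in>cube n. 2 * (Pf a n d)\<^sup>2 + 2 * ?c\<^sup>2 * (Qf a n d)\<^sup>2)"
    by (simp add: cube_sum power2_eq_square algebra_simps)
  also have "\<dots> = 2 * (\<Sum>d\<in>cube n. (Pf a n d)\<^sup>2) + 2 * ?c\<^sup>2 * (\<Sum>d\<in>cube n. (Qf a n d)\<^sup>2)"
    by (simp add: sum.distrib sum_distrib_left)
  finally have 1: "(\<Sum>d\<in>cube (Suc n). (Pf a (Suc n) d)\<^sup>2) = 2 * (\<Sum>d\<in>cube n. (Pf a n d)\<^sup>2) + 2 * ?c\<^sup>2 * (\<Sum>d\<in>cube n. (Qf a n d)\<^sup>2)" .
  have "(\<Sum>d\<in>cube (Suc n). (Qf a (Suc n) d)\<^sup>2)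
     = (\<Sum>d\<in>cube n. 2 * ?c\<^sup>2 * (Pf a n d)\<^sup>2 + 2 * (Qf a n d)\<^sup>2)"
    by (simp add: cube_sum power2_eq_square algebra_simps)
  also have "\<dots> = 2 * ?c\<^sup>2 * (\<Sum>d\<in>cube n. (Pf a n d)\<^sup>2) + 2 * (\<Sum>d\<in>cube n. (Qf a n d)\<^sup>2)"
    by (simp add: sum.distrib sum_distrib_left)
  finally have 2: "(\<Sum>d\<in>cube (Suc n). (Qf a (Suc n) d)\<^sup>2) = 2 * ?c\<^sup>2 * (\<Sum>d\<in>cube n. (Pf a n d)\<^sup>2) + 2 * (\<Sum>d\<in>cube n. (Qf a n d)\<^sup>2)" .
  show ?case using 1 2 Suc by (simp add: prod.nat_ivl_Suc' algebra_simps)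
qed

definition S :: "nat \<Rightarrow> ((nat \<Rightarrow> real) \<Rightarrow> real) \<Rightarrow> nat set \<Rightarrow> real" where
  "S n g A = (\<Sum>d\<in>cube n. g d * walsh A d)"

lemma fourier_S: "fourier n g A = S n g A / 2 ^ n"
  unfolding fourier_def S_def by simp

lemma S_sq:
  "\<forall>A. A \<subseteq> {1..n} \<longrightarrow> (S n (Pf a n) A)\<^sup>2 = (2 ^ n)\<^sup>2 * (\<Prod>i\<in>A. (a i)\<^sup>2)
      \<and> (S n (Qf a n) A)\<^sup>2 = (2 ^ n)\<^sup>2 * (\<Prod>i\<in>A. (a i)\<^sup>2)"
proof (induct n)
  case 0
  show ?case by (simp add: S_def cube_def walsh_def)
next
  case (Suc n)
  let ?c = "a (Suc n)"
  show ?case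
  proof (intro allI impI)
    fix A assume A: "A \<subseteq> {1..Suc n}"
    have fA: "finite A" using A finite_subset by blast
    show "(S (Suc n) (Pf a (Suc n)) A)\<^sup>2 = (2 ^ Suc n)\<^sup>2 * (\<Prod>i\<in>A. (a i)\<^sup>2)
      \<and> (S (Suc n) (Qf a (Suc n)) A)\<^sup>2 = (2 ^ Suc n)\<^sup>2 * (\<Prod>i\<in>A. (a i)\<^sup>2)"
    proof (cases "Suc n \<in> A")
      case False
      then have A': "A \<subseteq> {1..n}" using A by (auto simp: atLeastAtMostSuc_conv)
      have p: "S (Suc n) (Pf a (Suc n)) A = 2 * S n (Pf a n) A"
        unfolding S_def by (simp add: cube_sum walsh_notin[OF False] algebra_simps sum_distrib_left)
      have q: "S (Suc n) (Qf a (Suc n)) A = - 2 * S n (Qf a n) A"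
        unfolding S_def by (simp add: cube_sum walsh_notin[OF False] algebra_simps sum_distrib_left sum_negf)
      show ?thesis using Suc A' p q by (simp add: power2_eq_square algebra_simps)
    next
      case True
      let ?B = "A - {Suc n}"
      have B: "?B \<subseteq> {1..n}" using A by (auto simp: atLeastAtMostSuc_conv)
      have pr: "(\<Prod>i\<in>A. (a i)\<^sup>2) = ?c\<^sup>2 * (\<Prod>i\<in>?B. (a i)\<^sup>2)"
        using True fA by (simp add: prod.remove)
      have p: "S (Suc n) (Pf a (Suc n)) A = 2 * ?c * S n (Qf a n) ?B"
        unfolding S_def by (simp add: cube_sum walsh_in[OF True fA] algebra_simps sum_distrib_left)
      have q: "S (Suc n) (Qf a (Suc n)) A = 2 * ?c * S n (Pf a n) ?B"
        unfolding S_def by (simp add: cube_sum walsh_in[OF True fA] algebra_simps sum_distrib_left)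
      show ?thesis using Suc B p q pr by (simp add: power2_eq_square algebra_simps)
    qed
  qed
qed

lemma normInf_bounds:
  fixes g :: "(nat \<Rightarrow> real) \<Rightarrow> real" and C :: real
  assumes pw: "\<And>d. d \<in> cube n \<Longrightarrow> (g d)\<^sup>2 \<le> 2 * C"
    and sm: "(\<Sum>d\<in>cube n. (g d)\<^sup>2) = 2 ^ n * C"
    and C: "C \<ge> 0"
  shows "sqrt C \<le> normInf n g \<and> normInf n g \<le> sqrt 2 * sqrt C"
proof
  let ?M = "normInf n g"
  have fin: "finite ((\<lambda>d. \<bar>g d\<bar>) ` cube n)" using finite_cube by simp
  have ne: "(\<lambda>d. \<bar>g d\<bar>) ` cube n \<noteq> {}" using cube_nonempty by simp
  have ge: "\<bar>g d\<bar> \<le> ?M" if "d \<in> cube n" for d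
    unfolding normInf_def using fin that by (intro Max_ge) auto
  obtain d0 where d0: "d0 \<in> cube n" using cube_nonempty by blast
  have M0: "0 \<le> ?M" using ge[OF d0] by linarith
  have "(g d)\<^sup>2 \<le> ?M\<^sup>2" if "d \<in> cube n" for d
    using power_mono[OF ge[OF that], of 2] by simp
  then have "(\<Sum>d\<in>cube n. (g d)\<^sup>2) \<le> (\<Sum>d\<in>cube n. ?M\<^sup>2)" by (rule sum_mono)
  also have "\<dots> = 2 ^ n * ?M\<^sup>2" by (simp add: card_cube)
  finally have "C \<le> ?M\<^sup>2" using sm by simp
  then have "sqrt C \<le> sqrt (?M\<^sup>2)" by (rule real_sqrt_le_mono)
  then show "sqrt C \<le> ?M" using M0 by simp
  have "\<bar>g d\<bar> \<le> sqrt 2 * sqrt C" if "d \<in> cube n" for d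
  proof -
    have "sqrt ((g d)\<^sup>2) \<le> sqrt (2 * C)" using pw[OF that] by (rule real_sqrt_le_mono)
    then show ?thesis by (simp add: real_sqrt_mult)
  qed
  then show "?M \<le> sqrt 2 * sqrt C"
    unfolding normInf_def using fin ne by (subst Max_le_iff) auto
qed

theorem proposition1:
  fixes a :: "nat \<Rightarrow> real" and n :: nat
  assumes a_range: "\<And>i. i \<ge> 1 \<Longrightarrow> 0 < a i \<and> a i \<le> 1"
    and n_pos: "n \<ge> 1"
  shows "(\<forall>\<delta>\<in>cube n. (Pf a n \<delta>)\<^sup>2 + (Qf a n \<delta>)\<^sup>2 = 2 * (\<Prod>i=1..n. 1 + (a i)\<^sup>2))
    \<and> norm2 n (Pf a n) = (\<Prod>i=1..n. sqrt (1 + (a i)\<^sup>2))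
    \<and> norm2 n (Qf a n) = (\<Prod>i=1..n. sqrt (1 + (a i)\<^sup>2))
    \<and> (\<Prod>i=1..n. sqrt (1 + (a i)\<^sup>2)) \<le> normInf n (Pf a n)
    \<and> normInf n (Pf a n) \<le> sqrt 2 * (\<Prod>i=1..n. sqrt (1 + (a i)\<^sup>2))
    \<and> (\<Prod>i=1..n. sqrt (1 + (a i)\<^sup>2)) \<le> normInf n (Qf a n)
    \<and> normInf n (Qf a n) \<le> sqrt 2 * (\<Prod>i=1..n. sqrt (1 + (a i)\<^sup>2))
    \<and> (\<forall>A. A \<subseteq> {1..n} \<longrightarrow>
         (fourier n (Pf a n) A)\<^sup>2 = (\<Prod>i\<in>A. (a i)\<^sup>2)
       \<and> (fourier n (Qf a n) A)\<^sup>2 = (\<Prod>i\<in>A. (a i)\<^sup>2))"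
proof -
  let ?C = "\<Prod>i=1..n. 1 + (a i)\<^sup>2"
  have sq: "sqrt ?C = (\<Prod>i=1..n. sqrt (1 + (a i)\<^sup>2))" by (simp add: sqrt_prod_gen)
  have C0: "?C \<ge> 0" by (intro prod_nonneg) (auto intro: add_nonneg_nonneg)
  have pw: "(Pf a n d)\<^sup>2 + (Qf a n d)\<^sup>2 = 2 * ?C" if "d \<in> cube n" for d
    using that unfolding cube_def by (intro pointwise) (auto simp: PiE_iff)
  have pwP: "(Pf a n d)\<^sup>2 \<le> 2 * ?C" if "d \<in> cube n" for d
    using pw[OF that] by (smt (verit) zero_le_power2)
  have pwQ: "(Qf a n d)\<^sup>2 \<le> 2 * ?C" if "d \<in> cube n" for d
    using pw[OF that] by (smt (verit) zero_le_power2)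
  have n2P: "norm2 n (Pf a n) = sqrt ?C"
    unfolding norm2_def using sums_sq[where n=n and a=a] by simp
  have n2Q: "norm2 n (Qf a n) = sqrt ?C"
    unfolding norm2_def using sums_sq[where n=n and a=a] by simp
  have iP: "sqrt ?C \<le> normInf n (Pf a n) \<and> normInf n (Pf a n) \<le> sqrt 2 * sqrt ?C"
    using normInf_bounds[where n=n and g="Pf a n", OF pwP _ C0] sums_sq[where n=n and a=a] by blast
  have iQ: "sqrt ?C \<le> normInf n (Qf a n) \<and> normInf n (Qf a n) \<le> sqrt 2 * sqrt ?C"
    using normInf_bounds[where n=n and g="Qf a n", OF pwQ _ C0] sums_sq[where n=n and a=a] by blast
  have F: "(fourier n (Pf a n) A)\<^sup>2 = (\<Prod>i\<in>A. (a i)\<^sup>2)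
       \<and> (fourier n (Qf a n) A)\<^sup>2 = (\<Prod>i\<in>A. (a i)\<^sup>2)" if "A \<subseteq> {1..n}" for A
    using S_sq[where n=n and a=a] that by (simp add: fourier_S power_divide)
  show ?thesis using pw n2P n2Q iP iQ F sq by simp
qed

end
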